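(* Fix integers $h,w\ge2$. There exists an integer $r\ge1$ such that the following holds with $n=2hwr$: if for some integer $k\ge1$ there is a function $g:\{1,2,\dots,2h\}^k\to\{-1,+1\}^h$ satisfying $$\mathbb P_{S\sim\mathcal U_{k,n}}\big[\|g(f_S(z,h,w,r))-z\|_1\le h/4\big]\ge6/7\quad\text{for all }z\in\{-1,+1\}^h,$$ then $k\ge c\,h w^2$ for an absolute constant $c>0$ (i.e., $k=\Omega(hw^2)$).
   Context: Camouflaged populations: for integers $h,w,r\ge2$ (here $r\ge1$) and $z\in\{-1,+1\}^h$, let $n=2hwr$ and choose a partition $(A_1,\dots,A_{2h})$ of $[n]$ with $|A_{2j}|=r(w+z_j)$ and $|A_{2j-1}|=r(w-z_j)$ for each $j\in[h]$; define the feature $f(z,h,w,r):[n]\to\{1,\dots,2h\}$ by $f_i(z,h,w,r)=j$ for $i\in A_j$. For a panel $S=\{i_1,\dots,i_k\}$ (listed in some fixed order), $f_S(z,h,w,r)=(f_{i_1}(z,h,w,r),\dots,f_{i_k}(z,h,w,r))$. $\mathcal U_{k,n}$ is the uniform distribution over size-$k$ subsets of $[n]$. *)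

theory Defs
  imports Complex_Main "HOL-Library.FuncSet"
begin

definition signvecs :: "nat \<Rightarrow> (nat \<Rightarrow> int) set" where
  "signvecs h = ({1..h} \<rightarrow>\<^sub>E {-1, 1})"

definition block_size :: "(nat \<Rightarrow> int) \<Rightarrow> nat \<Rightarrow> nat \<Rightarrow> nat \<Rightarrow> nat" where
  "block_size z w r j =
     (if even j then nat (int r * (int w + z (j div 2)))
      else nat (int r * (int w - z ((j + 1) div 2))))"

text \<open>The (canonical) partition: A_1, A_2, ..., A_{2h} are consecutive blocks of [n] = {1..n},
  in this order. The feature of element i is the index j of the block containing it.\<close>
definition feature :: "(nat \<Rightarrow> int) \<Rightarrow> nat \<Rightarrow> nat \<Rightarrow> nat \<Rightarrow> nat \<Rightarrow> nat" where
  "feature z h w r i = (LEAST j. i \<le> (\<Sum>l=1..j. block_size z w r l))"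

definition feature_panel :: "(nat \<Rightarrow> int) \<Rightarrow> nat \<Rightarrow> nat \<Rightarrow> nat \<Rightarrow> nat set \<Rightarrow> nat list" where
  "feature_panel z h w r S = map (feature z h w r) (sorted_list_of_set S)"

definition unif_prob :: "nat \<Rightarrow> nat \<Rightarrow> (nat set \<Rightarrow> bool) \<Rightarrow> real" where
  "unif_prob k n P = real (card {S. S \<subseteq> {1..n} \<and> card S = k \<and> P S}) / real (n choose k)"

end

theory Submission
  imports Defs "HOL-Library.Multiset"
begin

definition Pz :: "(nat \<Rightarrow> int) \<Rightarrow> nat \<Rightarrow> nat \<Rightarrow> nat \<Rightarrow> nat" where
  "Pz z w r l = (\<Sum>m=1..l. block_size z w r m)"

lemma Pz_0[simp]: "Pz z w r 0 = 0" by (simp add: Pz_def)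
lemma Pz_Suc: "Pz z w r (Suc l) = Pz z w r l + block_size z w r (Suc l)"
  by (simp add: Pz_def)

lemma Pz_mono: "l \<le> l' \<Longrightarrow> Pz z w r l \<le> Pz z w r l'"
  by (induction l' rule: dec_induct) (auto simp: Pz_Suc)

lemma sv_val: "z \<in> signvecs h \<Longrightarrow> m \<in> {1..h} \<Longrightarrow> z m = -1 \<or> z m = 1"
  by (auto simp: signvecs_def PiE_def Pi_def)

lemma bs_pair:
  assumes "z m = -1 \<or> z m = 1" "w \<ge> 2" "m \<ge> 1" "r \<ge> 1"
  shows "block_size z w r (2*m-1) + block_size z w r (2*m) = 2*r*w"
    and "block_size z w r (2*m-1) = r*(w-1) \<or> block_size z w r (2*m-1) = r*(w+1)"
    and "block_size z w r (2*m-1) = r*(w-1) \<longleftrightarrow> z m = 1"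
proof -
  have o: "odd (2*m-1)" "(2*m-1+1) div 2 = m" "even (2*m)" "2*m div 2 = m" using assms by auto
  have e1: "block_size z w r (2*m-1) = nat (int r * (int w - z m))"
    using o by (simp add: block_size_def)
  have e2: "block_size z w r (2*m) = nat (int r * (int w + z m))"
    using o by (simp add: block_size_def)
  have n1: "nat (int r * (int w - 1)) = r*(w-1)" using assms(2)
    by (metis le_trans nat_int of_nat_1 of_nat_diff of_nat_mult one_le_numeral)
  have n2: "nat (int r * (int w + 1)) = r*(w+1)"
    by (metis nat_int of_nat_1 of_nat_add of_nat_mult)
  have n3: "r*(w-1) + r*(w+1) = 2*r*w" using assms(2)
  proof -
    have "w-1+(w+1) = 2*w" using assms(2) by arith
    then show ?thesis by (metis add_mult_distrib2 mult.assoc mult.commute)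
  qed
  show "block_size z w r (2*m-1) + block_size z w r (2*m) = 2*r*w"
    using assms(1) n1 n2 n3 unfolding e1 e2 by auto
  show "block_size z w r (2*m-1) = r*(w-1) \<or> block_size z w r (2*m-1) = r*(w+1)"
    using assms(1) n1 n2 unfolding e1 by auto
  have "r*(w-1) < r*(w+1)" using assms(2,4) by (intro mult_strict_left_mono) auto
  show "block_size z w r (2*m-1) = r*(w-1) \<longleftrightarrow> z m = 1"
    using assms(1) n1 n2 \<open>r*(w-1) < r*(w+1)\<close> unfolding e1 by (cases "z m = 1") auto
qed

lemma Pz_even:
  assumes "z \<in> signvecs h" "m \<le> h" "w \<ge> 2" "r \<ge> 1"
  shows "Pz z w r (2*m) = 2*r*w*m"
  using assms(2)
proof (induction m)
  case 0 then show ?case by simp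
next
  case (Suc m)
  have zm: "z (Suc m) = -1 \<or> z (Suc m) = 1" using sv_val[OF assms(1)] Suc.prems by auto
  have "2 * Suc m = Suc (Suc (2*m))" by simp
  then have "Pz z w r (2 * Suc m) = Pz z w r (2*m) + block_size z w r (2*Suc m - 1) + block_size z w r (2*Suc m)"
    by (simp add: Pz_Suc)
  also have "\<dots> = 2*r*w*m + 2*r*w" using bs_pair(1)[of z "Suc m" w r] zm assms(3,4) Suc by simp
  finally show ?case by simp
qed

lemma feature_Pz: "feature z h w r i = (LEAST l. i \<le> Pz z w r l)"
  by (simp add: feature_def Pz_def)

lemma feature_char:
  assumes "1 \<le> l" "Pz z w r (l-1) < i" "i \<le> Pz z w r l"
  shows "feature z h w r i = l"
  unfolding feature_Pz
proof (rule Least_equality)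
  show "i \<le> Pz z w r l" by fact
  fix y assume "i \<le> Pz z w r y"
  show "l \<le> y"
  proof (rule ccontr)
    assume "\<not> l \<le> y"
    then have "Pz z w r y \<le> Pz z w r (l-1)" by (intro Pz_mono) auto
    with assms \<open>i \<le> Pz z w r y\<close> show False by auto
  qed
qed

lemma feature_le: "i \<le> Pz z w r l \<Longrightarrow> feature z h w r i \<le> l"
  unfolding feature_Pz by (rule Least_le)

lemma feature_spec: "i \<le> Pz z w r l \<Longrightarrow> i \<le> Pz z w r (feature z h w r i)"
  unfolding feature_Pz by (rule LeastI)

lemma feature_ge1: "1 \<le> i \<Longrightarrow> i \<le> Pz z w r l \<Longrightarrow> 1 \<le> feature z h w r i"
  using feature_spec[of i z w r l h] by (cases "feature z h w r i") auto

lemma feature_mono: "i \<le> i' \<Longrightarrow> i' \<le> Pz z w r l \<Longrightarrow> feature z h w r i \<le> feature z h w r i'"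
  using feature_spec[of i' z w r l h] by (intro feature_le) auto

lemma bs_flip_other:
  assumes "l \<noteq> 2*j-1" "l \<noteq> 2*j"
  shows "block_size (z(j := zj)) w r l = block_size z w r l"
proof (cases "even l")
  case True
  then have "l div 2 \<noteq> j" using assms by auto
  then show ?thesis using True by (simp add: block_size_def)
next
  case False
  then have "(l+1) div 2 \<noteq> j" using assms by auto
  then show ?thesis using False by (simp add: block_size_def)
qed

lemma Pz_2j: "j \<ge> 1 \<Longrightarrow> Pz z w r (2*j) = Pz z w r (2*j-2) + block_size z w r (2*j-1) + block_size z w r (2*j)"
proof -
  assume "j \<ge> 1"
  then obtain j0 where j: "j = Suc j0" by (cases j) auto
  have "2*j = Suc (Suc (2*j0))" "2*j-1 = Suc (2*j0)" "2*j-2 = 2*j0" using j by auto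
  then show ?thesis by (simp add: Pz_Suc)
qed

lemma Pz_flip:
  assumes "z j = -1 \<or> z j = 1" "j \<ge> 1" "w \<ge> 2" "r \<ge> 1" "l \<noteq> 2*j-1"
  shows "Pz (z(j := - z j)) w r l = Pz z w r l"
  using assms(5)
proof (induction l rule: less_induct)
  case (less l)
  let ?z' = "z(j := - z j)"
  show ?case
  proof (cases l)
    case 0 then show ?thesis by simp
  next
    case (Suc l0)
    show ?thesis
    proof (cases "l = 2*j")
      case True
      have z'j: "?z' j = -1 \<or> ?z' j = 1" using assms(1) by auto
      have l0: "l0 = Suc (2*j-2)" using True Suc assms(2) by arith
      have "Pz ?z' w r l = Pz ?z' w r (2*j-2) + block_size ?z' w r (2*j-1) + block_size ?z' w r (2*j)"
        using Suc l0 True assms(2) Pz_2j by simp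
      also have "\<dots> = Pz ?z' w r (2*j-2) + 2*r*w"
        using bs_pair(1)[of ?z' j w r] z'j assms(3,2,4) by simp
      also have "Pz ?z' w r (2*j-2) = Pz z w r (2*j-2)"
        by (rule less.IH) (use True assms(2) in arith)+
      also have "Pz z w r l = Pz z w r (2*j-2) + block_size z w r (2*j-1) + block_size z w r (2*j)"
        using Suc l0 True assms(2) Pz_2j by simp
      ultimately show ?thesis
        using bs_pair(1)[of z j w r] assms(1,3,2,4) by simp
    next
      case False
      then have "block_size ?z' w r l = block_size z w r l"
        using less.prems by (intro bs_flip_other) auto
      moreover have "l0 \<noteq> 2*j-1" using False Suc assms(2) by auto
      moreover have "Pz ?z' w r l0 = Pz z w r l0" by (rule less.IH) (use Suc \<open>l0 \<noteq> 2*j-1\<close> in auto)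
      ultimately show ?thesis using Suc by (metis Pz_Suc)
    qed
  qed
qed

lemma feature_flip_out:
  assumes "z j = -1 \<or> z j = 1" "j \<ge> 1" "w \<ge> 2" "r \<ge> 1"
    and "i \<le> Pz z w r (2*j-2) \<or> Pz z w r (2*j) < i"
  shows "feature (z(j := - z j)) h w r i = feature z h w r i"
proof -
  let ?z' = "z(j := - z j)"
  have "(\<lambda>l. i \<le> Pz ?z' w r l) = (\<lambda>l. i \<le> Pz z w r l)"
  proof
    fix l
    show "(i \<le> Pz ?z' w r l) = (i \<le> Pz z w r l)"
    proof (cases "l = 2*j-1")
      case False then show ?thesis using Pz_flip[of z j w r l] assms(1-4) by simp
    next
      case True
      have a: "Pz ?z' w r (2*j-2) \<le> Pz ?z' w r l" "Pz ?z' w r l \<le> Pz ?z' w r (2*j)"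
           "Pz z w r (2*j-2) \<le> Pz z w r l" "Pz z w r l \<le> Pz z w r (2*j)"
        using True by (auto intro: Pz_mono)
      have b: "Pz ?z' w r (2*j-2) = Pz z w r (2*j-2)" "Pz ?z' w r (2*j) = Pz z w r (2*j)"
        using Pz_flip[of z j w r] assms(1-4) by auto
      show ?thesis using a b assms(5) by linarith
    qed
  qed
  then show ?thesis by (simp add: feature_Pz)
qed

lemma mset_sls: "mset (sorted_list_of_set A) = mset_set A"
  by (metis mset_sorted_list_of_multiset sorted_list_of_mset_set)

lemma image_mset_const_on:
  assumes "finite T" "\<And>x. x \<in> T \<Longrightarrow> f x = v"
  shows "image_mset f (mset_set T) = replicate_mset (card T) v"
proof -
  have "image_mset f (mset_set T) = image_mset (\<lambda>_. v) (mset_set T)"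
    using assms by (intro image_mset_cong) auto
  then show ?thesis by (simp add: image_mset_const_eq)
qed

locale pairsetup =
  fixes h w r :: nat and z :: "nat \<Rightarrow> int" and j :: nat
  assumes zsv: "z \<in> signvecs h" and j1: "1 \<le> j" and jh: "j \<le> h" and w2: "w \<ge> 2" and r1: "r \<ge> 1"
begin

definition "n = 2*h*w*r"
definition "z' = z(j := - z j)"
definition "p = Pz z w r (2*j-2)"
definition "I = {p+1..p+2*r*w}"
definition "Iy y = {p+1..p + block_size y w r (2*j-1)}"
definition "key y S = (S - I, card (S \<inter> Iy y), card (S \<inter> (I - Iy y)))"

lemma zj: "z j = -1 \<or> z j = 1" using sv_val[OF zsv] j1 jh by auto
lemma z'j: "z' j = -1 \<or> z' j = 1" using zj by (auto simp: z'_def)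

lemma z'sv: "z' \<in> signvecs h"
  using zsv j1 jh zj unfolding z'_def signvecs_def by (auto simp: PiE_def Pi_def extensional_def)

lemma y_cases: "y \<in> {z, z'} \<Longrightarrow> y j = -1 \<or> y j = 1" using zj z'j by auto

lemma Pz_y_2j2: "y \<in> {z, z'} \<Longrightarrow> Pz y w r (2*j-2) = p"
  using Pz_flip[of z j w r "2*j-2"] zj j1 w2 r1 unfolding p_def z'_def by auto

lemma Pz_y_2j: "y \<in> {z, z'} \<Longrightarrow> Pz y w r (2*j) = p + 2*r*w"
proof -
  assume y: "y \<in> {z, z'}"
  have "Pz y w r (2*j) = Pz y w r (2*j-2) + block_size y w r (2*j-1) + block_size y w r (2*j)"
    using Pz_2j j1 by blast
  then show ?thesis using bs_pair(1)[of y j w r] y_cases[OF y] j1 w2 r1 Pz_y_2j2[OF y] by simp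
qed

lemma Pz_y_2j1: "y \<in> {z, z'} \<Longrightarrow> Pz y w r (2*j-1) = p + block_size y w r (2*j-1)"
proof -
  have "2*j-1 = Suc (2*j-2)" using j1 by arith
  then show "y \<in> {z, z'} \<Longrightarrow> ?thesis" using Pz_y_2j2 by (simp add: Pz_Suc)
qed

lemma bs_y: "y \<in> {z, z'} \<Longrightarrow> block_size y w r (2*j-1) = r*(w-1) \<or> block_size y w r (2*j-1) = r*(w+1)"
  using bs_pair(2)[of y j w r] y_cases j1 w2 r1 by blast

lemma bs_y_le: "y \<in> {z, z'} \<Longrightarrow> block_size y w r (2*j-1) \<le> 2*r*w"
  using bs_pair(1)[of y j w r] y_cases j1 w2 r1 by fastforce

lemma bs_z': "block_size z' w r (2*j-1) = 2*r*w - block_size z w r (2*j-1)"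
proof -
  have "block_size z' w r (2*j-1) = block_size z w r (2*j)"
    using j1 zj by (cases "z j = 1") (auto simp: block_size_def z'_def)
  then show ?thesis using bs_pair(1)[of z j w r] zj j1 w2 r1 by simp
qed

lemma Pz_y_n: "y \<in> {z, z'} \<Longrightarrow> Pz y w r (2*h) = n"
  using Pz_even[of y h h w r] zsv z'sv w2 r1 unfolding n_def by (auto simp: algebra_simps)

lemma I_sub: "I \<subseteq> {1..n}"
proof -
  have "Pz z w r (2*j) \<le> Pz z w r (2*h)" using jh by (intro Pz_mono) auto
  then show ?thesis using Pz_y_2j[of z] Pz_y_n[of z] unfolding I_def by auto
qed

lemma Iy_sub: "y \<in> {z, z'} \<Longrightarrow> Iy y \<subseteq> I"
  using bs_y_le unfolding Iy_def I_def by fastforce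

lemma feat_range: "y \<in> {z, z'} \<Longrightarrow> i \<in> {1..n} \<Longrightarrow> feature y h w r i \<in> {1..2*h}"
  using feature_le[of i y w r "2*h" h] feature_ge1[of i y w r "2*h" h] Pz_y_n by auto

lemma feat_mono: "y \<in> {z, z'} \<Longrightarrow> i \<le> i' \<Longrightarrow> i' \<le> n \<Longrightarrow> feature y h w r i \<le> feature y h w r i'"
  using feature_mono[of i i' y w r "2*h" h] Pz_y_n by auto

lemma feat_Iy: "y \<in> {z, z'} \<Longrightarrow> i \<in> Iy y \<Longrightarrow> feature y h w r i = 2*j-1"
  using feature_char[of "2*j-1" y w r i h] Pz_y_2j1 Pz_y_2j2 j1 unfolding Iy_def
  by (auto simp: numeral_2_eq_2)

lemma feat_I_Iy: "y \<in> {z, z'} \<Longrightarrow> i \<in> I - Iy y \<Longrightarrow> feature y h w r i = 2*j"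
  using feature_char[of "2*j" y w r i h] Pz_y_2j1 Pz_y_2j j1 unfolding Iy_def I_def
  by auto

lemma feat_out: "y \<in> {z, z'} \<Longrightarrow> i \<notin> I \<Longrightarrow> feature y h w r i = feature z h w r i"
  using feature_flip_out[of z j w r i h] zj j1 w2 r1 Pz_y_2j2[of z] Pz_y_2j[of z]
  unfolding I_def z'_def by auto

lemma mset_panel:
  assumes y: "y \<in> {z, z'}" and S: "S \<subseteq> {1..n}"
  shows "mset (feature_panel y h w r S) =
     image_mset (feature z h w r) (mset_set (S - I)) + replicate_mset (card (S \<inter> Iy y)) (2*j-1)
       + replicate_mset (card (S \<inter> (I - Iy y))) (2*j)"
proof -
  have fin: "finite S" using S finite_subset by blast
  have Sdec: "S = (S - I) \<union> ((S \<inter> Iy y) \<union> (S \<inter> (I - Iy y)))" using Iy_sub[OF y] by blast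
  have e0: "mset (feature_panel y h w r S) = image_mset (feature y h w r) (mset_set S)"
    by (simp add: feature_panel_def mset_sls)
  have e1: "mset_set S = mset_set (S - I) + (mset_set (S \<inter> Iy y) + mset_set (S \<inter> (I - Iy y)))"
  proof -
    have "mset_set ((S \<inter> Iy y) \<union> (S \<inter> (I - Iy y))) = mset_set (S \<inter> Iy y) + mset_set (S \<inter> (I - Iy y))"
      using fin by (intro mset_set_Union) auto
    moreover have "mset_set ((S - I) \<union> ((S \<inter> Iy y) \<union> (S \<inter> (I - Iy y)))) = mset_set (S - I) + mset_set ((S \<inter> Iy y) \<union> (S \<inter> (I - Iy y)))"
      using fin Iy_sub[OF y] by (intro mset_set_Union) auto
    ultimately show ?thesis using Sdec by metis
  qed
  have e2: "image_mset (feature y h w r) (mset_set (S - I)) = image_mset (feature z h w r) (mset_set (S - I))"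
    using feat_out[OF y] fin by (intro image_mset_cong) (simp add: finite_subset)
  have e3: "image_mset (feature y h w r) (mset_set (S \<inter> Iy y)) = replicate_mset (card (S \<inter> Iy y)) (2*j-1)"
    using feat_Iy[OF y] fin by (intro image_mset_const_on) auto
  have e4: "image_mset (feature y h w r) (mset_set (S \<inter> (I - Iy y))) = replicate_mset (card (S \<inter> (I - Iy y))) (2*j)"
    using feat_I_Iy[OF y] fin by (intro image_mset_const_on) auto
  show ?thesis unfolding e0 e1 by (simp add: e2 e3 e4 add.assoc)
qed

lemma sorted_panel:
  assumes y: "y \<in> {z, z'}" and S: "S \<subseteq> {1..n}"
  shows "sorted (feature_panel y h w r S)"
proof -
  have fin: "finite S" using S finite_subset by blast
  have "sorted_wrt (\<le>) (sorted_list_of_set S)" using sorted_sorted_list_of_set by auto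
  then have "sorted_wrt (\<lambda>x y'. feature y h w r x \<le> feature y h w r y') (sorted_list_of_set S)"
    by (rule sorted_wrt_mono_rel[rotated]) (use fin S feat_mono[OF y] in auto)
  then show ?thesis by (simp add: feature_panel_def sorted_map)
qed

lemma panel_eq:
  assumes y1: "y1 \<in> {z, z'}" and y2: "y2 \<in> {z, z'}" and S: "S \<subseteq> {1..n}" and S': "S' \<subseteq> {1..n}"
    and k: "key y1 S = key y2 S'"
  shows "feature_panel y1 h w r S = feature_panel y2 h w r S'"
proof -
  have "mset (feature_panel y1 h w r S) = mset (feature_panel y2 h w r S')"
    using mset_panel[OF y1 S] mset_panel[OF y2 S'] k by (simp add: key_def)
  then have "sort (feature_panel y2 h w r S') = feature_panel y1 h w r S"
    using sorted_panel[OF y1 S] by (intro properties_for_sort) auto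
  then show ?thesis using sorted_panel[OF y2 S'] by (simp add: sorted_sort_id)
qed

end

lemma choose_step: "real (b choose Suc c) * real (Suc c) = real (b choose c) * (real b - real c)" if "c \<le> b"
proof -
  have "Suc c * (b choose Suc c) = b * ((b - 1) choose c)" by (rule binomial_absorption)
  also have "\<dots> = (b - c) * (b choose c)" by (rule binomial_absorb_comp[symmetric])
  finally have "real (Suc c * (b choose Suc c)) = real ((b - c) * (b choose c))" by simp
  then show ?thesis using that by (simp add: of_nat_diff algebra_simps)
qed

lemma choose_chain:
  assumes "c \<le> c'" "c' \<le> K" "K \<le> a" "K \<le> b" "q \<ge> 0"
    and fac: "\<And>x. x < K \<Longrightarrow> q * (real a - real x) \<le> real b - real x"
  shows "real (b choose c') * real (a choose c) \<ge> q ^ (c' - c) * real (a choose c') * real (b choose c)"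
  using assms(1,2)
proof (induction c' rule: dec_induct)
  case base then show ?case by simp
next
  case (step m)
  have m: "m < K" using step by auto
  have sb: "real (b choose Suc m) * real (Suc m) = real (b choose m) * (real b - real m)"
    using m assms by (intro choose_step) auto
  have sa: "real (a choose Suc m) * real (Suc m) = real (a choose m) * (real a - real m)"
    using m assms by (intro choose_step) auto
  have IH: "q ^ (m - c) * real (a choose m) * real (b choose c) \<le> real (b choose m) * real (a choose c)"
    using step by auto
  have am: "real a - real m \<ge> 0" using m assms by auto
  have "q ^ (Suc m - c) * real (a choose Suc m) * real (b choose c) * real (Suc m)
      = q * (q ^ (m - c) * real (a choose m) * real (b choose c)) * (real a - real m)"
  proof -
    have "Suc m - c = Suc (m - c)" using step(1) by arith
    then have "q ^ (Suc m - c) * real (a choose Suc m) * real (b choose c) * real (Suc m)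
       = q * q ^ (m - c) * real (b choose c) * (real (a choose Suc m) * real (Suc m))"
      by (simp only: power_Suc mult_ac)
    also have "\<dots> = q * (q ^ (m - c) * real (a choose m) * real (b choose c)) * (real a - real m)"
      unfolding sa by (simp only: mult_ac)
    finally show ?thesis .
  qed
  also have "\<dots> \<le> q * (real (b choose m) * real (a choose c)) * (real a - real m)"
    using IH am assms(5) by (intro mult_right_mono mult_left_mono) auto
  also have "\<dots> = real (b choose m) * real (a choose c) * (q * (real a - real m))" by simp
  also have "\<dots> \<le> real (b choose m) * real (a choose c) * (real b - real m)"
    using fac[OF m] by (intro mult_left_mono) auto
  also have "\<dots> = real (a choose c) * (real (b choose Suc m) * real (Suc m))"
    unfolding sb by (simp only: mult_ac)
  also have "\<dots> = real (b choose Suc m) * real (a choose c) * real (Suc m)" by (simp only: mult_ac)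
  finally show ?case by (simp del: of_nat_Suc)
qed

lemma ratio_bound:
  fixes a b r w k c1 c2 :: nat
  assumes ab: "(a = r*(w-1) \<and> b = r*(w+1)) \<or> (a = r*(w+1) \<and> b = r*(w-1))"
    and w: "w \<ge> 2" and kw: "k * w \<le> r" and c1: "c1 \<le> k" and c2: "c2 \<le> k"
    and d: "12 * \<bar>real c1 - real c2\<bar> \<le> real w"
  shows "real (b choose c1) * real (a choose c2) \<ge> 3/4 * (real (a choose c1) * real (b choose c2))"
proof (cases "c1 = c2")
  case True then show ?thesis by (simp add: algebra_simps)
next
  case False
  have "c1 + 1 \<le> c2 \<or> c2 + 1 \<le> c1" using False by arith
  then have "real c1 + 1 \<le> real c2 \<or> real c2 + 1 \<le> real c1"
    by (metis of_nat_1 of_nat_add of_nat_le_iff)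
  then have "12 \<le> real w" using d by (smt (verit))
  then have w12: "w \<ge> 12" by simp
  define q :: real where "q = 1 - 3 / real w"
  have q0: "q \<ge> 0" using w12 by (simp add: q_def)
  have q1: "q \<le> 1" by (simp add: q_def)
  have kr: "real k * real w \<le> real r" using kw by (metis of_nat_le_iff of_nat_mult)
  have kle: "k \<le> r * (w - 1)"
  proof -
    have "k * 1 \<le> k * w" using w by (intro mult_left_mono) auto
    also have "\<dots> \<le> r" by fact
    also have "r * 1 \<le> r * (w-1)" using w by (intro mult_left_mono) auto
    finally show ?thesis by simp
  qed
  have "r * (w-1) \<le> r*(w+1)" by (intro mult_left_mono) auto
  note rw = this
  then have ka: "k \<le> a" and kb: "k \<le> b" using ab kle by auto
  have fac: "q * (real a' - real x) \<le> real b' - real x"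
    if ab': "(a' = a \<and> b' = b) \<or> (a' = b \<and> b' = a)" and x: "x < k" for a' b' x
  proof -
    have xa: "real x \<le> real a'" "real x \<le> real b'" using ab' x ka kb by auto
    consider "a' \<le> b'" | "a' = r*(w+1)" "b' = r*(w-1)" using ab ab' rw by fastforce
    then show ?thesis
    proof cases
      case 1
      then have "q * (real a' - real x) \<le> 1 * (real a' - real x)"
        using q1 xa by (intro mult_right_mono) auto
      then show ?thesis using 1 by simp
    next
      case 2
      have xr: "real x * real w \<le> real r" using x kr
        by (smt (verit) mult_right_mono of_nat_0_le_iff of_nat_less_iff)
      have wpos: "real w > 0" using w12 by simp
      have "q * (real a' - real x) \<le> q * real a'" using q0 by (simp add: mult_left_mono)
      also have "\<dots> = real r * (real w + 1) * (1 - 3 / real w)"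
      proof -
        have "real a' = real r * (real w + 1)" using 2 by (simp add: algebra_simps)
        then show ?thesis unfolding q_def by (simp only: mult.commute)
      qed
      also have "\<dots> = real r * (real w - 2 - 3 / real w)" using wpos by (simp add: field_simps)
      also have "\<dots> \<le> real r * (real w - 1) - real r / real w"
        using wpos by (simp add: field_simps)
      also have "\<dots> \<le> real r * (real w - 1) - real x"
        using xr wpos by (simp add: field_simps)
      also have "\<dots> = real b' - real x" using 2 w by (simp add: of_nat_diff)
      finally show ?thesis .
    qed
  qed
  have bern: "q ^ m \<ge> 3/4" if "12 * real m \<le> real w" for m
  proof -
    have "1 + real m * (- 3 / real w) \<le> (1 + (- 3 / real w)) ^ m"
      using w12 by (intro Bernoulli_inequality) (simp add: field_simps)
    moreover have "1 + real m * (- 3 / real w) \<ge> 3/4" using that w12 by (simp add: field_simps)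
    ultimately show ?thesis by (simp add: q_def)
  qed
  show ?thesis
  proof (cases "c2 \<le> c1")
    case True
    have ch: "real (b choose c1) * real (a choose c2) \<ge> q ^ (c1 - c2) * real (a choose c1) * real (b choose c2)"
      using True c1 ka kb q0 fac by (intro choose_chain[where K=k]) auto
    have "q ^ (c1 - c2) \<ge> 3/4" using d True by (intro bern) (simp add: of_nat_diff)
    then have "q ^ (c1 - c2) * (real (a choose c1) * real (b choose c2)) \<ge> 3/4 * (real (a choose c1) * real (b choose c2))"
      by (intro mult_right_mono) auto
    then show ?thesis using ch by (simp add: mult.assoc)
  next
    case False
    have ch: "real (a choose c2) * real (b choose c1) \<ge> q ^ (c2 - c1) * real (b choose c2) * real (a choose c1)"
      using False c2 ka kb q0 fac by (intro choose_chain[where K=k]) auto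
    have "q ^ (c2 - c1) \<ge> 3/4" using d False by (intro bern) (simp add: of_nat_diff)
    then have "q ^ (c2 - c1) * (real (a choose c1) * real (b choose c2)) \<ge> 3/4 * (real (a choose c1) * real (b choose c2))"
      by (intro mult_right_mono) auto
    then show ?thesis using ch by (simp add: algebra_simps)
  qed
qed

lemma class_card:
  assumes fA: "finite A" and fB: "finite B" and AB: "A \<inter> B = {}" and fU: "finite U" and UAB: "U \<inter> (A \<union> B) = {}"
  shows "card {S. S - (A \<union> B) = U \<and> S \<subseteq> U \<union> A \<union> B \<and> card (S \<inter> A) = c1 \<and> card (S \<inter> B) = c2}
         = (card A choose c1) * (card B choose c2)"
proof -
  let ?F = "\<lambda>(T1, T2). U \<union> T1 \<union> T2"
  let ?P = "{T1. T1 \<subseteq> A \<and> card T1 = c1} \<times> {T2. T2 \<subseteq> B \<and> card T2 = c2}"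
  have eq: "{S. S - (A \<union> B) = U \<and> S \<subseteq> U \<union> A \<union> B \<and> card (S \<inter> A) = c1 \<and> card (S \<inter> B) = c2} = ?F ` ?P"
  proof (intro equalityI subsetI)
    fix S assume "S \<in> {S. S - (A \<union> B) = U \<and> S \<subseteq> U \<union> A \<union> B \<and> card (S \<inter> A) = c1 \<and> card (S \<inter> B) = c2}"
    then have S: "S - (A \<union> B) = U" "S \<subseteq> U \<union> A \<union> B" "card (S \<inter> A) = c1" "card (S \<inter> B) = c2" by auto
    have "S = ?F (S \<inter> A, S \<inter> B)" using S(1,2) by auto
    moreover have "(S \<inter> A, S \<inter> B) \<in> ?P" using S by auto
    ultimately show "S \<in> ?F ` ?P" by blast
  next
    fix S assume "S \<in> ?F ` ?P"
    then obtain T1 T2 where T: "T1 \<subseteq> A" "card T1 = c1" "T2 \<subseteq> B" "card T2 = c2" and S: "S = U \<union> T1 \<union> T2" by auto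
    have "S - (A \<union> B) = U" using S T UAB by auto
    moreover have "S \<inter> A = T1" using S T UAB AB by auto
    moreover have "S \<inter> B = T2" using S T UAB AB by auto
    ultimately show "S \<in> {S. S - (A \<union> B) = U \<and> S \<subseteq> U \<union> A \<union> B \<and> card (S \<inter> A) = c1 \<and> card (S \<inter> B) = c2}"
      using S T by auto
  qed
  have inj: "inj_on ?F ?P"
  proof (rule inj_onI)
    fix x y assume x: "x \<in> ?P" and y: "y \<in> ?P" and e: "?F x = ?F y"
    obtain x1 x2 where xx: "x = (x1, x2)" by force
    obtain y1 y2 where yy: "y = (y1, y2)" by force
    have "?F x \<inter> A = x1" "?F x \<inter> B = x2" using x xx UAB AB by auto
    moreover have "?F y \<inter> A = y1" "?F y \<inter> B = y2" using y yy UAB AB by auto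
    ultimately show "x = y" using e xx yy by auto
  qed
  have "card (?F ` ?P) = card ?P" using inj by (rule card_image)
  also have "\<dots> = (card A choose c1) * (card B choose c2)"
    using n_subsets[OF fA] n_subsets[OF fB] by (simp add: card_cartesian_product)
  finally show ?thesis using eq by simp
qed

context pairsetup
begin

definition "K k = {S. S \<subseteq> {1..n} \<and> card S = k}"

lemma finK: "finite (K k)" unfolding K_def by (rule finite_subset[of _ "Pow {1..n}"]) auto

lemma card_dec:
  assumes y: "y \<in> {z, z'}" and S: "S \<subseteq> {1..n}"
  shows "card S = card (S - I) + card (S \<inter> Iy y) + card (S \<inter> (I - Iy y))"
proof -
  have fin: "finite S" using S finite_subset by blast
  have "S = (S - I) \<union> ((S \<inter> Iy y) \<union> (S \<inter> (I - Iy y)))" using Iy_sub[OF y] by blast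
  then have "card S = card ((S - I) \<union> ((S \<inter> Iy y) \<union> (S \<inter> (I - Iy y))))" by simp
  also have "\<dots> = card (S - I) + card ((S \<inter> Iy y) \<union> (S \<inter> (I - Iy y)))"
    using fin Iy_sub[OF y] by (intro card_Un_disjoint) auto
  also have "card ((S \<inter> Iy y) \<union> (S \<inter> (I - Iy y))) = card (S \<inter> Iy y) + card (S \<inter> (I - Iy y))"
    using fin by (intro card_Un_disjoint) auto
  finally show ?thesis by simp
qed

lemma class_card_y:
  assumes y: "y \<in> {z, z'}" and U: "U \<subseteq> {1..n} - I" and cU: "card U + c1 + c2 = k"
  shows "card {S \<in> K k. key y S = (U, c1, c2)} = (block_size y w r (2*j-1) choose c1) * ((2*r*w - block_size y w r (2*j-1)) choose c2)"
proof -
  let ?A = "Iy y" and ?B = "I - Iy y"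
  have AB: "?A \<union> ?B = I" using Iy_sub[OF y] by auto
  have eq: "{S \<in> K k. key y S = (U, c1, c2)} = {S. S - (?A \<union> ?B) = U \<and> S \<subseteq> U \<union> ?A \<union> ?B \<and> card (S \<inter> ?A) = c1 \<and> card (S \<inter> ?B) = c2}"
  proof (intro equalityI subsetI)
    fix S assume "S \<in> {S \<in> K k. key y S = (U, c1, c2)}"
    then show "S \<in> {S. S - (?A \<union> ?B) = U \<and> S \<subseteq> U \<union> ?A \<union> ?B \<and> card (S \<inter> ?A) = c1 \<and> card (S \<inter> ?B) = c2}"
      using Iy_sub[OF y] by (auto simp: key_def K_def)
  next
    fix S assume "S \<in> {S. S - (?A \<union> ?B) = U \<and> S \<subseteq> U \<union> ?A \<union> ?B \<and> card (S \<inter> ?A) = c1 \<and> card (S \<inter> ?B) = c2}"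
    then have S: "S - I = U" "S \<subseteq> U \<union> I" "card (S \<inter> ?A) = c1" "card (S \<inter> ?B) = c2" using AB by auto
    have Sn: "S \<subseteq> {1..n}" using S(2) U I_sub by auto
    have "card S = k" using card_dec[OF y Sn] S cU by simp
    then show "S \<in> {S \<in> K k. key y S = (U, c1, c2)}" using Sn S by (auto simp: K_def key_def)
  qed
  have "card {S \<in> K k. key y S = (U, c1, c2)} = (card ?A choose c1) * (card ?B choose c2)"
    unfolding eq
  proof (rule class_card)
    show "finite U" using U finite_subset by blast
  qed (use U Iy_sub[OF y] in \<open>auto simp: I_def Iy_def\<close>)
  moreover have "card ?A = block_size y w r (2*j-1)" by (simp add: Iy_def)
  moreover have "card ?B = 2*r*w - block_size y w r (2*j-1)"
    using Iy_sub[OF y] by (simp add: card_Diff_subset I_def Iy_def)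
  ultimately show ?thesis by simp
qed

lemma ab_cases: "(block_size z w r (2*j-1) = r*(w-1) \<and> block_size z' w r (2*j-1) = r*(w+1)) \<or>
   (block_size z w r (2*j-1) = r*(w+1) \<and> block_size z' w r (2*j-1) = r*(w-1))"
proof -
  have e: "block_size y w r (2*j-1) = r*(w-1) \<longleftrightarrow> y j = 1" if "y \<in> {z, z'}" for y
    using bs_pair(3)[of y j w r] y_cases[OF that] j1 w2 r1 by blast
  have "z' j = - z j" by (simp add: z'_def)
  then show ?thesis using e[of z] e[of z'] bs_y[of z] bs_y[of z'] zj by auto
qed

end

context pairsetup
begin

definition "dd S = real (card (S \<inter> Iy z)) - real (card (S \<inter> (I - Iy z)))"

lemma pair_bound:
  fixes g :: "nat list \<Rightarrow> nat \<Rightarrow> int"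
  assumes kw: "k * w \<le> r"
  shows "real (card {S\<in>K k. g (feature_panel z h w r S) j \<noteq> z j}) + real (card {S\<in>K k. g (feature_panel z' h w r S) j \<noteq> z' j})
     \<ge> 3/4 * real (card {S\<in>K k. 12 * \<bar>dd S\<bar> \<le> real w})"
proof -
  define E1 where "E1 = {S\<in>K k. g (feature_panel z h w r S) j \<noteq> z j}"
  define E2 where "E2 = {S\<in>K k. g (feature_panel z' h w r S) j \<noteq> z' j}"
  define G where "G = {S\<in>K k. 12 * \<bar>dd S\<bar> \<le> real w}"
  define KS where "KS = key z ` K k"
  have zz: "z \<in> {z, z'}" "z' \<in> {z, z'}" by auto
  have fKS: "finite KS" unfolding KS_def using finK by simp
  have fE1: "finite E1" and fE2: "finite E2" and fG: "finite G"
    unfolding E1_def E2_def G_def using finK by auto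
  have sE1: "key z ` E1 \<subseteq> KS" unfolding KS_def E1_def by auto
  have sG: "key z ` G \<subseteq> KS" unfolding KS_def G_def by auto
  have a: "card E1 = (\<Sum>\<kappa>\<in>KS. card {S\<in>E1. key z S = \<kappa>})"
    using sum.group[OF fE1 fKS sE1, of "\<lambda>_. 1::nat"] by simp
  have c: "card G = (\<Sum>\<kappa>\<in>KS. card {S\<in>G. key z S = \<kappa>})"
    using sum.group[OF fG fKS sG, of "\<lambda>_. 1::nat"] by simp
  have b: "card E2 \<ge> (\<Sum>\<kappa>\<in>KS. card {S\<in>E2. key z' S = \<kappa>})"
  proof -
    let ?E = "{S\<in>E2. key z' S \<in> KS}"
    have "(\<Sum>\<kappa>\<in>KS. card {S\<in>E2. key z' S = \<kappa>}) = (\<Sum>\<kappa>\<in>KS. card {S\<in>?E. key z' S = \<kappa>})"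
    proof (intro sum.cong refl)
      fix x assume "x \<in> KS"
      then have "{S\<in>E2. key z' S = x} = {S\<in>?E. key z' S = x}" by auto
      then show "card {S\<in>E2. key z' S = x} = card {S\<in>?E. key z' S = x}" by simp
    qed
    also have "\<dots> = card ?E"
      using sum.group[of ?E KS "key z'" "\<lambda>_. 1::nat"] fE2 fKS by auto
    also have "\<dots> \<le> card E2" using fE2 by (intro card_mono) auto
    finally show ?thesis .
  qed
  have d: "real (card {S\<in>E1. key z S = \<kappa>}) + real (card {S\<in>E2. key z' S = \<kappa>}) \<ge> 3/4 * real (card {S\<in>G. key z S = \<kappa>})"
    if \<kappa>: "\<kappa> \<in> KS" for \<kappa>
  proof -
    obtain S0 where S0: "S0 \<in> K k" "\<kappa> = key z S0" using \<kappa> unfolding KS_def by auto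
    define U where "U = S0 - I"
    define c1 where "c1 = card (S0 \<inter> Iy z)"
    define c2 where "c2 = card (S0 \<inter> (I - Iy z))"
    have S0n: "S0 \<subseteq> {1..n}" "card S0 = k" using S0 by (auto simp: K_def)
    have \<kappa>e: "\<kappa> = (U, c1, c2)" using S0 by (simp add: key_def U_def c1_def c2_def)
    have U: "U \<subseteq> {1..n} - I" using S0n unfolding U_def by auto
    have cU: "card U + c1 + c2 = k" using card_dec[OF zz(1) S0n(1)] S0n unfolding U_def c1_def c2_def by simp
    define a where "a = block_size z w r (2*j-1)"
    define a' where "a' = block_size z' w r (2*j-1)"
    have aa: "2*r*w - a = a'" "2*r*w - a' = a" using bs_z' bs_y_le[of z] unfolding a_def a'_def by auto
    have C1: "card {S\<in>K k. key z S = \<kappa>} = (a choose c1) * (a' choose c2)"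
      using class_card_y[OF zz(1) U cU] aa unfolding \<kappa>e a_def by simp
    have C2: "card {S\<in>K k. key z' S = \<kappa>} = (a' choose c1) * (a choose c2)"
      using class_card_y[OF zz(2) U cU] aa unfolding \<kappa>e a'_def by simp
    have Gsub: "{S\<in>G. key z S = \<kappa>} \<subseteq> {S\<in>K k. key z S = \<kappa>}" unfolding G_def by auto
    have fC1: "finite {S\<in>K k. key z S = \<kappa>}" using finK by auto
    have Gle: "card {S\<in>G. key z S = \<kappa>} \<le> card {S\<in>K k. key z S = \<kappa>}" using card_mono[OF fC1 Gsub] .
    have ddk: "dd S = real c1 - real c2" if "key z S = \<kappa>" for S
      using that unfolding \<kappa>e by (simp add: key_def dd_def)
    show ?thesis
    proof (cases "g (feature_panel z h w r S0) j \<noteq> z j")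
      case True
      have "{S\<in>E1. key z S = \<kappa>} = {S\<in>K k. key z S = \<kappa>}"
      proof (intro equalityI subsetI)
        fix S assume S: "S \<in> {S\<in>K k. key z S = \<kappa>}"
        then have "feature_panel z h w r S = feature_panel z h w r S0"
          using S0 S0n by (intro panel_eq[OF zz(1) zz(1)]) (auto simp: K_def)
        then show "S \<in> {S\<in>E1. key z S = \<kappa>}" using S True unfolding E1_def by auto
      qed (auto simp: E1_def)
      then show ?thesis using Gle by simp
    next
      case False
      have "{S\<in>E2. key z' S = \<kappa>} = {S\<in>K k. key z' S = \<kappa>}"
      proof (intro equalityI subsetI)
        fix S assume S: "S \<in> {S\<in>K k. key z' S = \<kappa>}"
        then have "feature_panel z' h w r S = feature_panel z h w r S0"
          using S0 S0n by (intro panel_eq[OF zz(2) zz(1)]) (auto simp: K_def)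
        moreover have "z' j \<noteq> z j" using zj by (auto simp: z'_def)
        ultimately show "S \<in> {S\<in>E2. key z' S = \<kappa>}" using S False unfolding E2_def by auto
      qed (auto simp: E2_def)
      then have e2: "card {S\<in>E2. key z' S = \<kappa>} = (a' choose c1) * (a choose c2)" using C2 by simp
      show ?thesis
      proof (cases "12 * \<bar>real c1 - real c2\<bar> \<le> real w")
        case True
        have ab: "(a = r*(w-1) \<and> a' = r*(w+1)) \<or> (a = r*(w+1) \<and> a' = r*(w-1))"
          using ab_cases unfolding a_def a'_def .
        have "real (a' choose c1) * real (a choose c2) \<ge> 3/4 * (real (a choose c1) * real (a' choose c2))"
          by (rule ratio_bound[OF ab w2 kw _ _ True]) (use cU in auto)
        moreover have "real (card {S\<in>G. key z S = \<kappa>}) \<le> real (a choose c1) * real (a' choose c2)"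
          using Gle C1 by (metis of_nat_le_iff of_nat_mult)
        ultimately show ?thesis using e2 by simp
      next
        case False
        then have "{S\<in>G. key z S = \<kappa>} = {}" unfolding G_def using ddk by auto
        then show ?thesis by (simp only: card.empty)
      qed
    qed
  qed
  have "3/4 * real (card G) = (\<Sum>\<kappa>\<in>KS. 3/4 * real (card {S\<in>G. key z S = \<kappa>}))"
    unfolding c by (simp add: sum_distrib_left)
  also have "\<dots> \<le> (\<Sum>\<kappa>\<in>KS. real (card {S\<in>E1. key z S = \<kappa>}) + real (card {S\<in>E2. key z' S = \<kappa>}))"
    using d by (intro sum_mono) auto
  also have "\<dots> = real (card E1) + real (\<Sum>\<kappa>\<in>KS. card {S\<in>E2. key z' S = \<kappa>})"
    unfolding a by (simp add: sum.distrib)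
  also have "\<dots> \<le> real (card E1) + real (card E2)" using b by (simp only: of_nat_le_iff add_le_cancel_left)
  finally show ?thesis unfolding E1_def E2_def G_def by simp
qed

end

lemma card_supsets:
  assumes fA: "finite A" and BA: "B \<subseteq> A" and m: "card B \<le> k"
  shows "card {S. S \<subseteq> A \<and> card S = k \<and> B \<subseteq> S} = (card A - card B) choose (k - card B)"
proof -
  have fB: "finite B" using fA BA finite_subset by blast
  let ?T = "{T. T \<subseteq> A - B \<and> card T = k - card B}"
  have eq: "{S. S \<subseteq> A \<and> card S = k \<and> B \<subseteq> S} = (\<lambda>T. T \<union> B) ` ?T"
  proof (intro equalityI subsetI)
    fix S assume S: "S \<in> {S. S \<subseteq> A \<and> card S = k \<and> B \<subseteq> S}"
    then have fS: "finite S" using fA finite_subset by blast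
    have "card (S - B) = k - card B" using S fB by (simp add: card_Diff_subset)
    then have "S - B \<in> ?T" using S by auto
    moreover have "S = (S - B) \<union> B" using S by auto
    ultimately show "S \<in> (\<lambda>T. T \<union> B) ` ?T" by blast
  next
    fix S assume "S \<in> (\<lambda>T. T \<union> B) ` ?T"
    then obtain T where T: "T \<subseteq> A - B" "card T = k - card B" "S = T \<union> B" by auto
    have fT: "finite T" using T fA finite_subset by blast
    have "T \<inter> B = {}" using T by auto
    then have "card S = card T + card B" using T(3) card_Un_disjoint[OF fT fB] by simp
    then have "card S = k" using T m by simp
    then show "S \<in> {S. S \<subseteq> A \<and> card S = k \<and> B \<subseteq> S}" using T BA by auto
  qed
  have inj: "inj_on (\<lambda>T. T \<union> B) ?T"
    by (rule inj_onI) (auto simp: set_eq_iff)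
  have "card {S. S \<subseteq> A \<and> card S = k \<and> B \<subseteq> S} = card ?T" unfolding eq using inj by (rule card_image)
  also have "\<dots> = card (A - B) choose (k - card B)" using fA by (intro n_subsets) auto
  also have "card (A - B) = card A - card B" using BA fB by (simp add: card_Diff_subset)
  finally show ?thesis .
qed

context pairsetup
begin

definition "sg i = (if i \<in> Iy z then (1::real) else 0) - (if i \<in> I - Iy z then 1 else 0)"

lemma sum_ind: "finite S \<Longrightarrow> (\<Sum>i\<in>S. if i \<in> A then (1::real) else 0) = real (card (S \<inter> A))"
  by (simp add: sum.inter_restrict[symmetric])

lemma dd_sum: assumes S: "S \<subseteq> {1..n}" shows "dd S = (\<Sum>i\<in>{1..n}. if i \<in> S then sg i else 0)"
proof -
  have fS: "finite S" using S finite_subset by blast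
  have "(\<Sum>i\<in>{1..n}. if i \<in> S then sg i else 0) = (\<Sum>i\<in>{1..n} \<inter> S. sg i)"
    by (simp add: sum.inter_restrict)
  also have "{1..n} \<inter> S = S" using S by auto
  also have "(\<Sum>i\<in>S. sg i) = (\<Sum>i\<in>S. if i \<in> Iy z then (1::real) else 0) - (\<Sum>i\<in>S. if i \<in> I - Iy z then 1 else 0)"
    unfolding sg_def by (rule sum_subtractf)
  also have "\<dots> = dd S" unfolding sum_ind[OF fS] dd_def ..
  finally show ?thesis by simp
qed

lemma dd_sq: assumes S: "S \<subseteq> {1..n}"
  shows "(dd S)^2 = (\<Sum>i\<in>{1..n}. \<Sum>i'\<in>{1..n}. if i \<in> S \<and> i' \<in> S then sg i * sg i' else 0)"
  unfolding dd_sum[OF S] power2_eq_square sum_product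
  by (intro sum.cong refl) auto

lemma sum_sq:
  "(\<Sum>S\<in>K k. (dd S)^2) = (\<Sum>i\<in>{1..n}. \<Sum>i'\<in>{1..n}. sg i * sg i' * real (card {S\<in>K k. i \<in> S \<and> i' \<in> S}))"
proof -
  have "(\<Sum>S\<in>K k. (dd S)^2) = (\<Sum>S\<in>K k. \<Sum>i\<in>{1..n}. \<Sum>i'\<in>{1..n}. if i \<in> S \<and> i' \<in> S then sg i * sg i' else 0)"
    by (intro sum.cong refl dd_sq) (auto simp: K_def)
  also have "\<dots> = (\<Sum>i\<in>{1..n}. \<Sum>S\<in>K k. \<Sum>i'\<in>{1..n}. if i \<in> S \<and> i' \<in> S then sg i * sg i' else 0)"
    by (rule sum.swap)
  also have "\<dots> = (\<Sum>i\<in>{1..n}. \<Sum>i'\<in>{1..n}. \<Sum>S\<in>K k. if i \<in> S \<and> i' \<in> S then sg i * sg i' else 0)"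
    by (intro sum.cong refl sum.swap)
  also have "\<dots> = (\<Sum>i\<in>{1..n}. \<Sum>i'\<in>{1..n}. sg i * sg i' * real (card {S\<in>K k. i \<in> S \<and> i' \<in> S}))"
  proof (intro sum.cong refl)
    fix i i'
    have "(\<Sum>S\<in>K k. if i \<in> S \<and> i' \<in> S then sg i * sg i' else 0) = (\<Sum>S\<in>{S\<in>K k. i \<in> S \<and> i' \<in> S}. sg i * sg i')"
      by (rule sum.inter_filter[symmetric]) (rule finK)
    also have "\<dots> = sg i * sg i' * real (card {S\<in>K k. i \<in> S \<and> i' \<in> S})" by (simp add: mult.commute)
    finally show "(\<Sum>S\<in>K k. if i \<in> S \<and> i' \<in> S then sg i * sg i' else 0) = sg i * sg i' * real (card {S\<in>K k. i \<in> S \<and> i' \<in> S})" .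
  qed
  finally show ?thesis .
qed

lemma cnt1: assumes "i \<in> {1..n}" "1 \<le> k" shows "card {S\<in>K k. i \<in> S \<and> i \<in> S} = (n - 1) choose (k - 1)"
proof -
  have "{S\<in>K k. i \<in> S \<and> i \<in> S} = {S. S \<subseteq> {1..n} \<and> card S = k \<and> {i} \<subseteq> S}" by (auto simp: K_def)
  then show ?thesis using card_supsets[of "{1..n}" "{i}" k] assms by simp
qed

lemma cnt2: assumes "i \<in> {1..n}" "i' \<in> {1..n}" "i \<noteq> i'" "2 \<le> k"
  shows "card {S\<in>K k. i \<in> S \<and> i' \<in> S} = (n - 2) choose (k - 2)"
proof -
  have "{S\<in>K k. i \<in> S \<and> i' \<in> S} = {S. S \<subseteq> {1..n} \<and> card S = k \<and> {i, i'} \<subseteq> S}" by (auto simp: K_def)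
  moreover have "card {i, i'} = 2" using assms by simp
  moreover have "{i, i'} \<subseteq> {1..n}" using assms by simp
  ultimately show ?thesis using card_supsets[of "{1..n}" "{i, i'}" k] assms(4) by simp
qed

lemma cnt2': assumes "i \<noteq> i'" "k < 2"
  shows "card {S\<in>K k. i \<in> S \<and> i' \<in> S} = 0"
proof -
  have "{S\<in>K k. i \<in> S \<and> i' \<in> S} = {}"
  proof (rule ccontr)
    assume "{S\<in>K k. i \<in> S \<and> i' \<in> S} \<noteq> {}"
    then obtain S where S: "S \<in> K k" "i \<in> S" "i' \<in> S" by auto
    have "finite S" using S by (auto simp: K_def finite_subset)
    then have "card {i, i'} \<le> card S" using S by (intro card_mono) auto
    then show False using S assms by (auto simp: K_def)
  qed
  then show ?thesis by (metis card.empty)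
qed

end

context pairsetup
begin

lemma npos: "n \<ge> 2"
proof -
  have "0 < h*w*r" using w2 r1 j1 jh by simp
  then show ?thesis unfolding n_def by simp
qed

lemma sum_sg_sq: "(\<Sum>i\<in>{1..n}. sg i * sg i) = real (2*r*w)"
proof -
  have "(\<Sum>i\<in>{1..n}. sg i * sg i) = (\<Sum>i\<in>{1..n}. if i \<in> I then 1 else 0)"
    using Iy_sub[of z] by (intro sum.cong refl) (auto simp: sg_def)
  also have "\<dots> = real (card ({1..n} \<inter> I))" by (rule sum_ind) simp
  also have "{1..n} \<inter> I = I" using I_sub by auto
  finally show ?thesis by (simp add: I_def)
qed

lemma sum_sg: "(\<Sum>i\<in>{1..n}. sg i)^2 = 4 * real r ^ 2"
proof -
  have "(\<Sum>i\<in>{1..n}. sg i) = dd {1..n}"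
    using dd_sum[of "{1..n}"] by simp
  also have "\<dots> = real (block_size z w r (2*j-1)) - real (2*r*w - block_size z w r (2*j-1))"
  proof -
    have "{1..n} \<inter> Iy z = Iy z" "{1..n} \<inter> (I - Iy z) = I - Iy z" using Iy_sub[of z] I_sub by auto
    moreover have "card (Iy z) = block_size z w r (2*j-1)" by (simp add: Iy_def)
    moreover have "card (I - Iy z) = 2*r*w - block_size z w r (2*j-1)"
      using Iy_sub[of z] by (simp add: card_Diff_subset I_def Iy_def)
    ultimately show ?thesis unfolding dd_def by (simp only:)
  qed
  finally have e: "(\<Sum>i\<in>{1..n}. sg i) = real (block_size z w r (2*j-1)) - real (2*r*w - block_size z w r (2*j-1))" .
  have "w-1+(w+1) = 2*w" using w2 by arith
  then have "r*(w-1) + r*(w+1) = 2*r*w" by (metis add_mult_distrib2 mult.assoc mult.commute)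
  then consider "block_size z w r (2*j-1) = r*(w-1)" "2*r*w - block_size z w r (2*j-1) = r*(w+1)"
    | "block_size z w r (2*j-1) = r*(w+1)" "2*r*w - block_size z w r (2*j-1) = r*(w-1)"
    using ab_cases bs_z' by auto
  then show ?thesis
  proof cases
    case 1
    have d: "real (r*(w-1)) - real (r*(w+1)) = - 2 * real r" using w2 by (simp add: of_nat_diff algebra_simps)
    have s: "sum sg {1..n} = real (r*(w-1)) - real (r*(w+1))" using e 1 by (simp only:)
    show ?thesis unfolding s d by (simp add: power2_eq_square)
  next
    case 2
    have d: "real (r*(w+1)) - real (r*(w-1)) = 2 * real r" using w2 by (simp add: of_nat_diff algebra_simps)
    have s: "sum sg {1..n} = real (r*(w+1)) - real (r*(w-1))" using e 2 by (simp only:)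
    show ?thesis unfolding s d by (simp add: power2_eq_square)
  qed
qed

lemma moment:
  assumes k1: "1 \<le> k" and kn: "k \<le> n"
  shows "(\<Sum>S\<in>K k. (dd S)^2) \<le> real (n choose k) * (real k / real h + (real k)^2 / ((real h)^2 * (real w)^2))"
proof -
  define C where "C = real (n choose k)"
  define X1 where "X1 = real ((n - 1) choose (k - 1))"
  define x2 where "x2 = (if 2 \<le> k then real ((n - 2) choose (k - 2)) else 0)"
  have cnt: "real (card {S\<in>K k. i \<in> S \<and> i' \<in> S}) = (if i = i' then X1 else x2)"
    if "i \<in> {1..n}" "i' \<in> {1..n}" for i i'
    using cnt1[of i k] cnt2[of i i' k] cnt2'[of i i' k] that k1 unfolding X1_def x2_def by auto
  have "(\<Sum>S\<in>K k. (dd S)^2) = (\<Sum>i\<in>{1..n}. \<Sum>i'\<in>{1..n}. sg i * sg i' * (if i = i' then X1 else x2))"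
    unfolding sum_sq by (intro sum.cong refl) (simp add: cnt)
  also have "\<dots> = (\<Sum>i\<in>{1..n}. \<Sum>i'\<in>{1..n}. x2 * (sg i * sg i') + (if i = i' then (X1 - x2) * (sg i * sg i) else 0))"
    by (intro sum.cong refl) (auto simp: algebra_simps)
  also have "\<dots> = (\<Sum>i\<in>{1..n}. x2 * sg i * (\<Sum>i'\<in>{1..n}. sg i') + (X1 - x2) * (sg i * sg i))"
  proof (intro sum.cong refl)
    fix i assume i: "i \<in> {1..n}"
    have "(\<Sum>i'\<in>{1..n}. x2 * (sg i * sg i') + (if i = i' then (X1 - x2) * (sg i * sg i) else 0))
       = (\<Sum>i'\<in>{1..n}. x2 * sg i * sg i') + (\<Sum>i'\<in>{1..n}. (if i = i' then (X1 - x2) * (sg i * sg i) else 0))"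
      by (simp only: sum.distrib mult.assoc)
    also have "(\<Sum>i'\<in>{1..n}. (if i = i' then (X1 - x2) * (sg i * sg i) else 0)) = (X1 - x2) * (sg i * sg i)"
      using i by simp
    also have "(\<Sum>i'\<in>{1..n}. x2 * sg i * sg i') = x2 * sg i * (\<Sum>i'\<in>{1..n}. sg i')"
      by (simp only: sum_distrib_left)
    finally show "(\<Sum>i'\<in>{1..n}. x2 * (sg i * sg i') + (if i = i' then (X1 - x2) * (sg i * sg i) else 0))
       = x2 * sg i * (\<Sum>i'\<in>{1..n}. sg i') + (X1 - x2) * (sg i * sg i)" .
  qed
  also have "\<dots> = x2 * (\<Sum>i\<in>{1..n}. sg i)^2 + (X1 - x2) * (\<Sum>i\<in>{1..n}. sg i * sg i)"
    by (simp only: sum.distrib sum_distrib_left[symmetric] sum_distrib_right[symmetric] power2_eq_square mult.assoc)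
  also have "\<dots> = x2 * (4 * real r ^ 2) + (X1 - x2) * real (2*r*w)"
    unfolding sum_sg sum_sg_sq ..
  finally have T: "(\<Sum>S\<in>K k. (dd S)^2) = x2 * (4 * real r ^ 2) + (X1 - x2) * real (2*r*w)" .
  have x20: "x2 \<ge> 0" unfolding x2_def by auto
  have nr: "real n = 2 * real h * real w * real r" unfolding n_def by simp
  have hpos: "real h > 0" "real w > 0" "real r > 0" using jh j1 w2 r1 by auto
  have X1e: "X1 * real n = C * real k"
  proof -
    have "k * (n choose k) = n * ((n - 1) choose (k - 1))" using k1 by (intro times_binomial_minus1_eq) auto
    then have "real k * C = real n * X1" unfolding C_def X1_def by (metis of_nat_mult)
    then show ?thesis by (simp add: algebra_simps)
  qed
  have x2b: "x2 * (real n)^2 \<le> C * (real k)^2"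
  proof (cases "2 \<le> k")
    case False then show ?thesis using x2_def C_def by simp
  next
    case True
    have e1: "k * (n choose k) = n * ((n - 1) choose (k - 1))" using k1 by (intro times_binomial_minus1_eq) auto
    have e2: "(k - 1) * ((n - 1) choose (k - 1)) = (n - 1) * ((n - 1 - 1) choose (k - 1 - 1))"
      using True by (intro times_binomial_minus1_eq) auto
    have "k * (k - 1) * (n choose k) = (k - 1) * (k * (n choose k))" by (simp only: mult_ac)
    also have "\<dots> = n * ((k - 1) * ((n - 1) choose (k - 1)))" unfolding e1 by (simp only: mult_ac)
    also have "\<dots> = n * ((n - 1) * ((n - 1 - 1) choose (k - 1 - 1)))" unfolding e2 ..
    also have "n - 1 - 1 = n - 2" by arith
    also have "k - 1 - 1 = k - 2" by arith
    finally have nat_e: "k * (k - 1) * (n choose k) = n * (n - 1) * ((n - 2) choose (k - 2))" by (simp only: mult_ac)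
    have "real (k * (k - 1) * (n choose k)) = real k * (real k - 1) * C"
      unfolding C_def using k1 by (simp add: of_nat_diff)
    moreover have "real (n * (n - 1) * ((n - 2) choose (k - 2))) = real n * (real n - 1) * x2"
      unfolding x2_def using True npos by (simp add: of_nat_diff)
    ultimately have e: "real k * (real k - 1) * C = real n * (real n - 1) * x2" using nat_e by metis
    have n1: "real n - 1 > 0" using npos by simp
    have C0: "C \<ge> 0" unfolding C_def by simp
    have "x2 * (real n)^2 * (real n - 1) = real n * (real n * (real n - 1) * x2)" by (simp add: power2_eq_square algebra_simps)
    also have "\<dots> = real n * (real k * (real k - 1) * C)" using e by simp
    also have "\<dots> \<le> C * (real k)^2 * (real n - 1)"
    proof -
      have "real k \<le> real n" using kn by simp
      then have "real n * (real k - 1) \<le> real k * (real n - 1)" by (simp add: algebra_simps)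
      then have "real n * (real k - 1) * (real k * C) \<le> real k * (real n - 1) * (real k * C)"
        using C0 by (intro mult_right_mono) auto
      then show ?thesis by (simp add: power2_eq_square algebra_simps)
    qed
    finally show ?thesis using n1 by simp
  qed
  have "(\<Sum>S\<in>K k. (dd S)^2) \<le> X1 * real (2*r*w) + x2 * (4 * real r ^ 2)"
    unfolding T using x20 by (simp add: algebra_simps)
  also have "X1 * real (2*r*w) = C * real k / real h"
    using X1e nr hpos by (simp add: field_simps)
  also have "x2 * (4 * real r ^ 2) \<le> C * (real k)^2 / ((real h)^2 * (real w)^2)"
  proof -
    have "x2 * (4 * real r ^ 2) = x2 * (real n)^2 / ((real h)^2 * (real w)^2)"
      using nr hpos by (simp add: field_simps power2_eq_square)
    also have "\<dots> \<le> C * (real k)^2 / ((real h)^2 * (real w)^2)"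
      using x2b by (intro divide_right_mono) auto
    finally show ?thesis .
  qed
  finally show ?thesis by (simp add: C_def algebra_simps add_divide_distrib)
qed

lemma cheb:
  "real (card {S\<in>K k. \<not> 12 * \<bar>dd S\<bar> \<le> real w}) * (real w)^2 \<le> 144 * (\<Sum>S\<in>K k. (dd S)^2)"
proof -
  let ?B = "{S\<in>K k. \<not> 12 * \<bar>dd S\<bar> \<le> real w}"
  have "real (card ?B) * (real w)^2 = (\<Sum>S\<in>?B. (real w)^2)" by simp
  also have "\<dots> \<le> (\<Sum>S\<in>?B. 144 * (dd S)^2)"
  proof (intro sum_mono)
    fix S assume "S \<in> ?B"
    then have "real w < 12 * \<bar>dd S\<bar>" by auto
    then have "(real w)^2 \<le> (12 * \<bar>dd S\<bar>)^2" by (intro power_mono) auto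
    then show "(real w)^2 \<le> 144 * (dd S)^2" by (simp add: power_mult_distrib)
  qed
  also have "\<dots> \<le> (\<Sum>S\<in>K k. 144 * (dd S)^2)" using finK by (intro sum_mono2) auto
  finally show ?thesis by (simp add: sum_distrib_left)
qed

end

definition flipz :: "nat \<Rightarrow> (nat \<Rightarrow> int) \<Rightarrow> (nat \<Rightarrow> int)" where "flipz j z = z(j := - z j)"

lemma ps: "z \<in> signvecs h \<Longrightarrow> j \<in> {1..h} \<Longrightarrow> w \<ge> 2 \<Longrightarrow> r \<ge> 1 \<Longrightarrow> pairsetup h w r z j"
  by unfold_locales auto

lemma flip_in: assumes "z \<in> signvecs h" "j \<in> {1..h}" shows "flipz j z \<in> signvecs h"
proof -
  interpret pairsetup h 2 1 z j using ps[of z h j 2 1] assms by auto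
  show ?thesis using z'sv unfolding z'_def flipz_def .
qed

lemma flip_flip: "flipz j (flipz j z) = z" by (simp add: flipz_def)

lemma sum_flip:
  assumes j: "j \<in> {1..h}"
  shows "(\<Sum>z\<in>signvecs h. f (flipz j z)) = (\<Sum>z\<in>signvecs h. (f z :: real))"
proof -
  have im: "flipz j ` signvecs h = signvecs h"
  proof (intro equalityI subsetI)
    fix x assume "x \<in> flipz j ` signvecs h" then show "x \<in> signvecs h" using flip_in j by auto
  next
    fix x assume x: "x \<in> signvecs h"
    then have "flipz j x \<in> signvecs h" using flip_in j by auto
    moreover have "x = flipz j (flipz j x)" by (simp add: flip_flip)
    ultimately show "x \<in> flipz j ` signvecs h" by blast
  qed
  have inj: "inj_on (flipz j) (signvecs h)"
    by (rule inj_on_inverseI[where g="flipz j"]) (simp add: flip_flip)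
  have "(\<Sum>z\<in>signvecs h. f z) = (\<Sum>z\<in>flipz j ` signvecs h. f z)" using im by simp
  also have "\<dots> = (\<Sum>z\<in>signvecs h. f (flipz j z))" using inj by (simp add: sum.reindex)
  finally show ?thesis by simp
qed

lemma double_count:
  assumes "finite A" "finite B"
  shows "(\<Sum>b\<in>B. card {a\<in>A. P a b}) = (\<Sum>a\<in>A. card {b\<in>B. P a b})"
proof -
  have e: "card {x\<in>X. Q x} = (\<Sum>x\<in>X. if Q x then 1 else 0)" if "finite X" for X :: "'c set" and Q
    using that by (simp add: sum.inter_filter[symmetric])
  show ?thesis using assms by (simp add: e sum.swap[of _ B])
qed

lemma arith1:
  fixes h w k B C :: real
  assumes hp: "h > 0" and wp: "w > 0" and k0: "k \<ge> 0" and small: "1000 * k < h * w^2"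
    and B: "B * w^2 \<le> 144 * (C * (k / h + k^2 / (h^2 * w^2)))" and C0: "C \<ge> 0"
  shows "B \<le> 29/200 * C"
proof -
  define t where "t = k / h"
  have t0: "t \<ge> 0" using k0 hp by (simp add: t_def)
  have tw: "t \<le> w^2 / 1000" using small hp by (simp add: t_def field_simps)
  have e2: "k^2 / (h^2 * w^2) = t^2 / w^2" by (simp add: t_def power_divide field_simps)
  have "t^2 \<le> (w^2/1000)^2" using t0 tw by (intro power_mono) auto
  then have "t^2 / w^2 \<le> (w^2/1000)^2 / w^2" using wp by (intro divide_right_mono) auto
  also have "(w^2/1000)^2 / w^2 = w^2 / 1000000" using wp by (simp add: power2_eq_square field_simps)
  finally have t2: "t^2 / w^2 \<le> w^2 / 1000000" .
  have "k / h + k^2 / (h^2 * w^2) = t + t^2 / w^2" using e2 t_def by simp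
  then have s: "k / h + k^2 / (h^2 * w^2) \<le> w^2 * (1001 / 1000000)"
    using tw t2 by linarith
  have "B * w^2 \<le> 144 * (C * (w^2 * (1001 / 1000000)))"
    using B s C0 by (smt (verit) mult_left_mono)
  also have "\<dots> \<le> (29/200 * C) * w^2" using C0 wp by (simp add: algebra_simps)
  finally show ?thesis using wp by simp
qed

lemma main_contra:
  fixes h w k :: nat and g :: "nat list \<Rightarrow> nat \<Rightarrow> int"
  assumes h2: "h \<ge> 2" and w2: "w \<ge> 2" and k1: "k \<ge> 1"
    and gv: "\<forall>x. length x = k \<longrightarrow> set x \<subseteq> {1..2*h} \<longrightarrow> g x \<in> signvecs h"
    and hyp: "\<forall>z \<in> signvecs h. unif_prob k (2*h*w*(h*w^3)) (\<lambda>S. (\<Sum>j=1..h. \<bar>real_of_int (g (feature_panel z h w (h*w^3) S) j - z j)\<bar>) \<le> real h / 4) \<ge> 6/7"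
    and small: "1000 * real k < real h * real w ^ 2"
  shows False
proof -
  define r where "r = h * w^3"
  define n where "n = 2*h*w*r"
  define KK where "KK = {S. S \<subseteq> {1..n} \<and> card S = k}"
  define C where "C = real (n choose k)"
  define Z where "Z = signvecs h"
  define e where "e z j = card {S\<in>KK. g (feature_panel z h w r S) j \<noteq> z j}" for z j
  have r1: "r \<ge> 1" using h2 w2 by (simp add: r_def)
  have sm: "1000 * k < h * w^2" using small by (metis of_nat_less_iff of_nat_mult of_nat_numeral of_nat_power)
  have kw: "k * w \<le> r"
  proof -
    have "k * w * 1000 = (1000 * k) * w" by simp
    also have "\<dots> \<le> (h * w^2) * w" using sm by simp
    also have "\<dots> = r" by (simp add: r_def power_numeral_reduce power2_eq_square)
    finally show ?thesis by simp
  qed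
  have kn: "k \<le> n"
  proof -
    have "k \<le> k * w" using w2 by simp
    also have "\<dots> \<le> r" by fact
    also have "r \<le> n" using h2 w2 by (simp add: n_def)
    finally show ?thesis .
  qed
  have finKK: "finite KK" unfolding KK_def by (rule finite_subset[of _ "Pow {1..n}"]) auto
  have cardKK: "card KK = n choose k" unfolding KK_def using n_subsets[of "{1..n}" k] by simp
  have Cpos: "C > 0" unfolding C_def using kn by simp
  have finZ: "finite Z" unfolding Z_def signvecs_def by (intro finite_PiE) auto
  have Zne: "Z \<noteq> {}"
  proof -
    have "(\<lambda>i\<in>{1..h}. (1::int)) \<in> Z" unfolding Z_def signvecs_def by auto
    then show ?thesis by auto
  qed
  have hpos: "real h > 0" "real w > 0" using h2 w2 by auto

  have step2: "real (e z j) + real (e (flipz j z) j) \<ge> 16/25 * C" if z: "z \<in> Z" and j: "j \<in> {1..h}" for z j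
  proof -
    interpret P: pairsetup h w r z j using ps[of z h j w r] z j w2 r1 unfolding Z_def by auto
    have KKe: "P.K k = KK" unfolding P.K_def P.n_def KK_def n_def ..
    have z'e: "P.z' = flipz j z" unfolding P.z'_def flipz_def ..
    note pb = P.pair_bound[OF kw, of g]
    let ?G = "{S\<in>KK. 12 * \<bar>P.dd S\<bar> \<le> real w}"
    let ?B = "{S\<in>KK. \<not> 12 * \<bar>P.dd S\<bar> \<le> real w}"
    have GB: "card ?G + card ?B = card KK"
    proof -
      have "card (?G \<union> ?B) = card ?G + card ?B" using finKK by (intro card_Un_disjoint) auto
      moreover have "?G \<union> ?B = KK" by auto
      ultimately show ?thesis by simp
    qed
    have ch: "real (card ?B) * (real w)^2 \<le> 144 * (C * (real k / real h + (real k)^2 / ((real h)^2 * (real w)^2)))"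
    proof -
      have "real (card ?B) * (real w)^2 \<le> 144 * (\<Sum>S\<in>KK. (P.dd S)^2)"
        using P.cheb[of k] unfolding KKe .
      also have "(\<Sum>S\<in>KK. (P.dd S)^2) \<le> C * (real k / real h + (real k)^2 / ((real h)^2 * (real w)^2))"
        using P.moment[OF k1] kn unfolding KKe C_def P.n_def n_def by simp
      finally show ?thesis by simp
    qed
    have Bb: "real (card ?B) \<le> 29/200 * C"
      by (rule arith1[OF hpos _ small ch]) (use Cpos in auto)
    have "real (card ?G + card ?B) = C" unfolding C_def GB cardKK ..
    then have "real (card ?G) + real (card ?B) = C" by simp
    then have "real (card ?G) \<ge> 171/200 * C" using Bb by linarith
    moreover have "real (e z j) + real (e (flipz j z) j) \<ge> 3/4 * real (card ?G)"
      using pb unfolding KKe z'e e_def by simp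
    ultimately show ?thesis by simp
  qed
  have step1: "(\<Sum>j\<in>{1..h}. real (e z j)) \<le> 15/56 * real h * C" if z: "z \<in> Z" for z
  proof -
    define P where "P S = ((\<Sum>j=1..h. \<bar>real_of_int (g (feature_panel z h w r S) j - z j)\<bar>) \<le> real h / 4)" for S
    define err where "err S = card {j\<in>{1..h}. g (feature_panel z h w r S) j \<noteq> z j}" for S
    interpret P1: pairsetup h w r z 1 using ps[of z h 1 w r] z h2 w2 r1 unfolding Z_def by auto
    have "unif_prob k n P \<ge> 6/7" using hyp z unfolding Z_def P_def n_def r_def by auto
    moreover have "{S. S \<subseteq> {1..n} \<and> card S = k \<and> P S} = {S\<in>KK. P S}" unfolding KK_def by auto
    ultimately have "real (card {S\<in>KK. P S}) / C \<ge> 6/7" unfolding unif_prob_def C_def by simp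
    then have goodC: "real (card {S\<in>KK. P S}) \<ge> 6/7 * C" using Cpos by (simp add: pos_le_divide_eq)
    have part: "real (card {S\<in>KK. P S}) + real (card {S\<in>KK. \<not> P S}) = C"
    proof -
      have "card ({S\<in>KK. P S} \<union> {S\<in>KK. \<not> P S}) = card {S\<in>KK. P S} + card {S\<in>KK. \<not> P S}"
        using finKK by (intro card_Un_disjoint) auto
      moreover have "{S\<in>KK. P S} \<union> {S\<in>KK. \<not> P S} = KK" by auto
      ultimately have "card {S\<in>KK. P S} + card {S\<in>KK. \<not> P S} = n choose k" using cardKK by simp
      then have "real (card {S\<in>KK. P S} + card {S\<in>KK. \<not> P S}) = C" unfolding C_def by simp
      then show ?thesis by simp
    qed
    have sumeq: "(\<Sum>j\<in>{1..h}. e z j) = (\<Sum>S\<in>KK. err S)"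
      unfolding e_def err_def using double_count[OF finKK, of "{1..h}"] by simp
    have dist: "(\<Sum>j=1..h. \<bar>real_of_int (g (feature_panel z h w r S) j - z j)\<bar>) = 2 * real (err S)"
      if S: "S \<in> KK" for S
    proof -
      have Sn: "S \<subseteq> {1..P1.n}" "card S = k" using S unfolding KK_def n_def P1.n_def by auto
      have fS: "finite S" using Sn finite_subset by blast
      have "length (feature_panel z h w r S) = k" using Sn by (simp add: feature_panel_def)
      moreover have "set (feature_panel z h w r S) \<subseteq> {1..2*h}"
        using P1.feat_range[of z] Sn fS by (auto simp: feature_panel_def)
      ultimately have gS: "g (feature_panel z h w r S) \<in> signvecs h" using gv by auto
      let ?G = "g (feature_panel z h w r S)"
      have "(\<Sum>j=1..h. \<bar>real_of_int (?G j - z j)\<bar>) = (\<Sum>j=1..h. if ?G j \<noteq> z j then 2 else 0)"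
      proof (intro sum.cong refl)
        fix j assume j: "j \<in> {1..h}"
        have "?G j = -1 \<or> ?G j = 1" "z j = -1 \<or> z j = 1" using sv_val[OF gS j] sv_val[OF z[unfolded Z_def] j] by auto
        then show "\<bar>real_of_int (?G j - z j)\<bar> = (if ?G j \<noteq> z j then 2 else 0)" by auto
      qed
      also have "\<dots> = (\<Sum>j\<in>{j\<in>{1..h}. ?G j \<noteq> z j}. 2)" by (rule sum.inter_filter[symmetric]) simp
      also have "\<dots> = 2 * real (err S)" unfolding err_def by simp
      finally show ?thesis .
    qed
    have pt: "real (err S) \<le> real h / 8 + (if P S then 0 else real h)" if S: "S \<in> KK" for S
    proof (cases "P S")
      case True then show ?thesis using dist[OF S] unfolding P_def by simp
    next
      case False
      have "err S \<le> card {1..h}" unfolding err_def by (intro card_mono) auto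
      then show ?thesis using False by simp
    qed
    have "(\<Sum>j\<in>{1..h}. real (e z j)) = (\<Sum>S\<in>KK. real (err S))"
      using sumeq by (metis of_nat_sum)
    also have "\<dots> \<le> (\<Sum>S\<in>KK. real h / 8 + (if P S then 0 else real h))"
      using pt by (intro sum_mono) auto
    also have "\<dots> = real (card KK) * (real h / 8) + (\<Sum>S\<in>{S\<in>KK. \<not> P S}. real h)"
    proof -
      have "(\<Sum>S\<in>{S\<in>KK. \<not> P S}. real h) = (\<Sum>S\<in>KK. if \<not> P S then real h else 0)"
        using finKK by (rule sum.inter_filter)
      also have "\<dots> = (\<Sum>S\<in>KK. if P S then 0 else real h)" by (intro sum.cong refl) auto
      finally show ?thesis by (simp add: sum.distrib)
    qed
    also have "\<dots> = C * (real h / 8) + real (card {S\<in>KK. \<not> P S}) * real h"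
      using cardKK unfolding C_def by simp
    also have "\<dots> \<le> 15/56 * real h * C"
    proof -
      have "real (card {S\<in>KK. \<not> P S}) \<le> C / 7" using part goodC by linarith
      then have "real (card {S\<in>KK. \<not> P S}) * real h \<le> C / 7 * real h" by (intro mult_right_mono) auto
      then show ?thesis by (simp add: algebra_simps)
    qed
    finally show ?thesis .
  qed
  define A where "A = (\<Sum>z\<in>Z. \<Sum>j\<in>{1..h}. real (e z j))"
  have "(\<Sum>z\<in>Z. \<Sum>j\<in>{1..h}. real (e (flipz j z) j)) = (\<Sum>j\<in>{1..h}. \<Sum>z\<in>Z. real (e (flipz j z) j))"
    by (rule sum.swap)
  also have "\<dots> = (\<Sum>j\<in>{1..h}. \<Sum>z\<in>Z. real (e z j))"
    unfolding Z_def by (intro sum.cong refl sum_flip[where f="\<lambda>z. real (e z _)"]) auto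
  also have "\<dots> = A" unfolding A_def by (rule sum.swap)
  finally have fl: "(\<Sum>z\<in>Z. \<Sum>j\<in>{1..h}. real (e (flipz j z) j)) = A" .
  have "real (card Z) * (real h * (16/25 * C)) = (\<Sum>z\<in>Z. \<Sum>j\<in>{1..h}. 16/25 * C)" by simp
  also have "\<dots> \<le> (\<Sum>z\<in>Z. \<Sum>j\<in>{1..h}. real (e z j) + real (e (flipz j z) j))"
    using step2 by (intro sum_mono) auto
  also have "\<dots> = A + A" using fl unfolding A_def by (simp add: sum.distrib)
  also have "A \<le> (\<Sum>z\<in>Z. 15/56 * real h * C)" unfolding A_def using step1 by (intro sum_mono) auto
  finally have "real (card Z) * (real h * (16/25 * C)) \<le> 2 * (real (card Z) * (15/56 * real h * C))" by simp
  moreover have "real (card Z) * real h * C > 0" using finZ Zne hpos Cpos by (simp add: card_gt_0_iff)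
  ultimately show False by (simp add: algebra_simps)
qed

theorem lemma2p8:
  shows "\<exists>c::real. c > 0 \<and>
    (\<forall>h w :: nat. h \<ge> 2 \<longrightarrow> w \<ge> 2 \<longrightarrow>
      (\<exists>r::nat. r \<ge> 1 \<and>
        (\<forall>(k::nat) (g :: nat list \<Rightarrow> nat \<Rightarrow> int).
           k \<ge> 1 \<longrightarrow>
           (\<forall>x. length x = k \<longrightarrow> set x \<subseteq> {1..2*h} \<longrightarrow> g x \<in> signvecs h) \<longrightarrow>
           (\<forall>z \<in> signvecs h.
              unif_prob k (2*h*w*r)
                (\<lambda>S. (\<Sum>j=1..h. \<bar>real_of_int (g (feature_panel z h w r S) j - z j)\<bar>) \<le> real h / 4)
              \<ge> 6/7) \<longrightarrow>
           real k \<ge> c * real h * real w ^ 2)))"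
  proof -
  have "\<forall>h w :: nat. h \<ge> 2 \<longrightarrow> w \<ge> 2 \<longrightarrow>
      (\<exists>r::nat. r \<ge> 1 \<and>
        (\<forall>(k::nat) (g :: nat list \<Rightarrow> nat \<Rightarrow> int).
           k \<ge> 1 \<longrightarrow>
           (\<forall>x. length x = k \<longrightarrow> set x \<subseteq> {1..2*h} \<longrightarrow> g x \<in> signvecs h) \<longrightarrow>
           (\<forall>z \<in> signvecs h.
              unif_prob k (2*h*w*r)
                (\<lambda>S. (\<Sum>j=1..h. \<bar>real_of_int (g (feature_panel z h w r S) j - z j)\<bar>) \<le> real h / 4)
              \<ge> 6/7) \<longrightarrow>
           real k \<ge> (1/1000) * real h * real w ^ 2))"
  proof (intro allI impI)
    fix h w :: nat assume h2: "h \<ge> 2" and w2: "w \<ge> 2"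
    show "\<exists>r::nat. r \<ge> 1 \<and>
        (\<forall>(k::nat) (g :: nat list \<Rightarrow> nat \<Rightarrow> int).
           k \<ge> 1 \<longrightarrow>
           (\<forall>x. length x = k \<longrightarrow> set x \<subseteq> {1..2*h} \<longrightarrow> g x \<in> signvecs h) \<longrightarrow>
           (\<forall>z \<in> signvecs h.
              unif_prob k (2*h*w*r)
                (\<lambda>S. (\<Sum>j=1..h. \<bar>real_of_int (g (feature_panel z h w r S) j - z j)\<bar>) \<le> real h / 4)
              \<ge> 6/7) \<longrightarrow>
           real k \<ge> (1/1000) * real h * real w ^ 2)"
    proof (intro exI[of _ "h * w^3"] conjI allI impI)
      show "1 \<le> h * w^3" using h2 w2 by simp
      fix k :: nat and g :: "nat list \<Rightarrow> nat \<Rightarrow> int"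
      assume k1: "k \<ge> 1"
        and gv: "\<forall>x. length x = k \<longrightarrow> set x \<subseteq> {1..2*h} \<longrightarrow> g x \<in> signvecs h"
        and hyp: "\<forall>z \<in> signvecs h. unif_prob k (2*h*w*(h*w^3))
                (\<lambda>S. (\<Sum>j=1..h. \<bar>real_of_int (g (feature_panel z h w (h*w^3) S) j - z j)\<bar>) \<le> real h / 4) \<ge> 6/7"
      show "real k \<ge> (1/1000) * real h * real w ^ 2"
      proof (rule ccontr)
        assume "\<not> real k \<ge> (1/1000) * real h * real w ^ 2"
        then have "1000 * real k < real h * real w ^ 2" by simp
        then show False using main_contra[OF h2 w2 k1 gv hyp] by blast
      qed
    qed
  qed
  then show ?thesis by (intro exI[of _ "1/1000::real"]) simp
qed

end
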